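(* Suppose $m\ge5$ and $n\ge5$. Then there is no term order $\omega$ on $\mathbb{K}[y_S]$ such that $I_{P_n}$ has a Gröbner basis with respect to $\omega$ all of whose elements are weakly $Q_{m,n}$-homogeneous with respect to $\omega$.
   Context: A DAG's v-structure is $i\to k\leftarrow j$ with $i,j$ non-adjacent; Markov equivalence classes with a given skeleton are determined by their v-structures, and for an undirected graph $G$ the characteristic imset ideal $I_G$ is the kernel of the map sending the variable of a class to $\prod_{S:c(S)=1}t_S$, where $c(S)=1$ iff some $i\in S$ has $S\setminus\{i\}\subseteq\mathrm{pa}(i)$ in a DAG of the class. $P_n$ is the path $1-2-\cdots-n$; its classes are indexed by collider sets $S\subseteq\{2,\dots,n-1\}$ with no two consecutive integers, giving variables $y_S$ of the ring containing $I_{P_n}$. With $N=n+m-4$, $P'_m$ is the path with vertices $n-1,n,\dots,N,1,2$ in this order; its classes are indexed by sets $S'$ of interior vertices (among $n,\dots,N,1$) with no two consecutive along the path. $Q_{m,n}$ is the set of pairs $(S',S)$ of such collider sets with no two elements of $S'\cup S$ cyclically consecutive modulo $N$ and $S'\cup S\ne\emptyset$. A polynomial $f\in\mathbb{K}[y_S]$ homogeneous of degree $d$ with $\omega$-leading monomial $y_{S_1}\cdots y_{S_d}$ is weakly $Q_{m,n}$-homogeneous w.r.t. $\omega$ if for every monomial $y_{T_1}\cdots y_{T_d}$ of $f$ there is a permutation $\sigma$ of $[d]$ with $\{(S'_1,\dots,S'_d):(S'_\ell,S_\ell)\in Q_{m,n}\ \forall\ell\}\subseteq\{(S'_1,\dots,S'_d):(S'_\ell,T_{\sigma(\ell)})\in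 Q_{m,n}\ \forall\ell\}$. *)

theory Defs
  imports "HOL-Library.Poly_Mapping" "HOL-Combinatorics.Permutations"
begin

text \<open>A path graph is given by the list of its vertices in order (edges between
consecutive entries).  An orientation d of the path says for each edge index k
(edge between vs!k and vs!(k+1)) whether it is directed vs!k -> vs!(k+1) (True)
or vs!(k+1) -> vs!k (False).  Every orientation of a path is acyclic.\<close>

definition path_parents :: "nat list \<Rightarrow> (nat \<Rightarrow> bool) \<Rightarrow> nat \<Rightarrow> nat set" where
  "path_parents vs d v = {u. \<exists>k. k + 1 < length vs \<and>
      ((vs!k = u \<and> vs!(k+1) = v \<and> d k) \<or> (vs!k = v \<and> vs!(k+1) = u \<and> \<not> d k))}"

text \<open>Colliders i -> k <- j; on a path these are exactly the v-structures.\<close>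
definition path_colliders :: "nat list \<Rightarrow> (nat \<Rightarrow> bool) \<Rightarrow> nat set" where
  "path_colliders vs d = {v. \<exists>k. k + 2 < length vs \<and> vs!(k+1) = v \<and> d k \<and> \<not> d (k+1)}"

text \<open>Index sets of the Markov equivalence classes: sets of interior vertices
with no two consecutive along the path.\<close>
definition collider_sets :: "nat list \<Rightarrow> nat set set" where
  "collider_sets vs = {S. S \<subseteq> set (butlast (tl vs)) \<and>
      (\<forall>k. k + 1 < length vs \<longrightarrow> \<not> (vs!k \<in> S \<and> vs!(k+1) \<in> S))}"

text \<open>Characteristic imset of the class with collider set S, evaluated at T.\<close>
definition char_imset :: "nat list \<Rightarrow> nat set \<Rightarrow> nat set \<Rightarrow> bool" where
  "char_imset vs S T \<longleftrightarrow> (\<exists>d. path_colliders vs d = S \<and>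
      (\<exists>i\<in>T. T - {i} \<subseteq> path_parents vs d i))"

definition path_P :: "nat \<Rightarrow> nat list" where
  "path_P n = [1..<n+1]"

definition path_P' :: "nat \<Rightarrow> nat \<Rightarrow> nat list" where
  "path_P' m n = [n-1..<(n+m-4)+1] @ [1, 2]"

type_synonym monom = "nat set \<Rightarrow>\<^sub>0 nat"
type_synonym 'k ypoly = "monom \<Rightarrow>\<^sub>0 'k"

definition in_ring :: "nat set set \<Rightarrow> ('k::zero) ypoly \<Rightarrow> bool" where
  "in_ring V f \<longleftrightarrow> (\<forall>a\<in>Poly_Mapping.keys f. Poly_Mapping.keys a \<subseteq> V)"

text \<open>Exponent (in the t_T) of the image of the monomial a under y_S |-> prod_{T: c_S(T)=1} t_T.\<close>
definition imset_mon :: "nat list \<Rightarrow> monom \<Rightarrow> monom" where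
  "imset_mon vs a = (\<Sum>S\<in>Poly_Mapping.keys a. (\<Sum>T\<in>{T. T \<subseteq> set vs \<and> char_imset vs S T}.
                        Poly_Mapping.single T (Poly_Mapping.lookup a S)))"

text \<open>The ring map y_S |-> prod_{T: c_S(T)=1} t_T, applied to a polynomial.\<close>
definition imset_hom :: "nat list \<Rightarrow> ('k::field) ypoly \<Rightarrow> 'k ypoly" where
  "imset_hom vs f = (\<Sum>a\<in>Poly_Mapping.keys f. Poly_Mapping.single (imset_mon vs a) (Poly_Mapping.lookup f a))"

definition imset_ideal :: "nat list \<Rightarrow> ('k::field) ypoly set" where
  "imset_ideal vs = {f. in_ring (collider_sets vs) f \<and> imset_hom vs f = 0}"

definition term_order :: "nat set set \<Rightarrow> (monom \<Rightarrow> monom \<Rightarrow> bool) \<Rightarrow> bool" where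
  "term_order V le \<longleftrightarrow>
    (\<forall>a. Poly_Mapping.keys a \<subseteq> V \<longrightarrow> le a a) \<and>
    (\<forall>a b. Poly_Mapping.keys a \<subseteq> V \<longrightarrow> Poly_Mapping.keys b \<subseteq> V \<longrightarrow> le a b \<longrightarrow> le b a \<longrightarrow> a = b) \<and>
    (\<forall>a b c. Poly_Mapping.keys a \<subseteq> V \<longrightarrow> Poly_Mapping.keys b \<subseteq> V \<longrightarrow> Poly_Mapping.keys c \<subseteq> V \<longrightarrow> le a b \<longrightarrow> le b c \<longrightarrow> le a c) \<and>
    (\<forall>a b. Poly_Mapping.keys a \<subseteq> V \<longrightarrow> Poly_Mapping.keys b \<subseteq> V \<longrightarrow> le a b \<or> le b a) \<and>
    (\<forall>a. Poly_Mapping.keys a \<subseteq> V \<longrightarrow> le 0 a) \<and>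
    (\<forall>a b c. Poly_Mapping.keys a \<subseteq> V \<longrightarrow> Poly_Mapping.keys b \<subseteq> V \<longrightarrow> Poly_Mapping.keys c \<subseteq> V \<longrightarrow> le a b \<longrightarrow> le (a + c) (b + c))"

definition lead_mon :: "(monom \<Rightarrow> monom \<Rightarrow> bool) \<Rightarrow> ('k::zero) ypoly \<Rightarrow> monom" where
  "lead_mon le f = (THE a. a \<in> Poly_Mapping.keys f \<and> (\<forall>b\<in>Poly_Mapping.keys f. le b a))"

definition mon_dvd :: "monom \<Rightarrow> monom \<Rightarrow> bool" where
  "mon_dvd a b \<longleftrightarrow> (\<forall>S. Poly_Mapping.lookup a S \<le> Poly_Mapping.lookup b S)"

definition groebner_basis :: "(monom \<Rightarrow> monom \<Rightarrow> bool) \<Rightarrow> ('k::field) ypoly set \<Rightarrow> 'k ypoly set \<Rightarrow> bool" where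
  "groebner_basis le I G \<longleftrightarrow> finite G \<and> G \<subseteq> I \<and>
     (\<forall>f\<in>I. f \<noteq> 0 \<longrightarrow> (\<exists>g\<in>G. g \<noteq> 0 \<and> mon_dvd (lead_mon le g) (lead_mon le f)))"

definition mon_deg :: "monom \<Rightarrow> nat" where
  "mon_deg a = (\<Sum>S\<in>Poly_Mapping.keys a. Poly_Mapping.lookup a S)"

definition cyc_consec :: "nat \<Rightarrow> nat \<Rightarrow> nat \<Rightarrow> bool" where
  "cyc_consec N x y \<longleftrightarrow> (x + 1) mod N = y mod N"

definition Q_set :: "nat \<Rightarrow> nat \<Rightarrow> (nat set \<times> nat set) set" where
  "Q_set m n = {(S', S). S' \<in> collider_sets (path_P' m n) \<and> S \<in> collider_sets (path_P n) \<and>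
      (\<forall>x\<in>S' \<union> S. \<forall>y\<in>S' \<union> S. \<not> cyc_consec (n + m - 4) x y) \<and> S' \<union> S \<noteq> {}}"

definition represents :: "nat set list \<Rightarrow> monom \<Rightarrow> bool" where
  "represents Ss a \<longleftrightarrow> (\<forall>S. count (mset Ss) S = Poly_Mapping.lookup a S)"

definition weakly_Q_hom :: "nat \<Rightarrow> nat \<Rightarrow> (monom \<Rightarrow> monom \<Rightarrow> bool) \<Rightarrow> ('k::zero) ypoly \<Rightarrow> bool" where
  "weakly_Q_hom m n le f \<longleftrightarrow> f \<noteq> 0 \<and> (\<exists>d. (\<forall>a\<in>Poly_Mapping.keys f. mon_deg a = d) \<and>
     (\<forall>a\<in>Poly_Mapping.keys f. \<forall>Ss Ts. length Ss = d \<longrightarrow> length Ts = d \<longrightarrow>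
        represents Ss (lead_mon le f) \<longrightarrow> represents Ts a \<longrightarrow>
        (\<exists>\<sigma>. \<sigma> permutes {..<d} \<and>
           {S's. length S's = d \<and> (\<forall>l<d. (S's!l, Ss!l) \<in> Q_set m n)} \<subseteq>
           {S's. length S's = d \<and> (\<forall>l<d. (S's!l, Ts!(\<sigma> l)) \<in> Q_set m n)})))"

end

theory Submission
  imports Defs
begin

lemma P_len: "length (path_P n) = n" by (simp add: path_P_def)
lemma P_nth: "k < n \<Longrightarrow> path_P n ! k = k + 1" unfolding path_P_def by (subst nth_upt) auto
lemma P_set: "set (path_P n) = {1..n}" by (auto simp: path_P_def)

lemma P_interior: "set (butlast (tl (path_P n))) = {2..n-1}"
proof -
  have "tl (path_P n) = [2..<n+1]" by (auto simp: path_P_def tl_upt numeral_2_eq_2)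
  moreover have "butlast [2..<n+1] = [2..<n]"
    by simp
  ultimately show ?thesis by auto
qed

lemma cs_P: "S \<in> collider_sets (path_P n) \<longleftrightarrow> S \<subseteq> {2..n-1} \<and> (\<forall>i\<in>S. i+1 \<notin> S)"
proof
  assume h: "S \<in> collider_sets (path_P n)"
  then have sub: "S \<subseteq> {2..n-1}" by (simp add: collider_sets_def P_interior)
  moreover have "\<forall>i\<in>S. i+1 \<notin> S"
  proof (intro ballI notI)
    fix i assume i: "i \<in> S" "i+1 \<in> S"
    then have "i \<ge> 2" "i + 1 \<le> n - 1" using sub by auto
    then have "i - 1 + 1 < length (path_P n)" "path_P n ! (i-1) = i" "path_P n ! (i-1+1) = i+1"
      by (simp_all add: P_len P_nth)
    then show False using h i unfolding collider_sets_def by (metis (no_types, lifting) mem_Collect_eq)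
  qed
  ultimately show "S \<subseteq> {2..n-1} \<and> (\<forall>i\<in>S. i+1 \<notin> S)" by blast
next
  assume h: "S \<subseteq> {2..n-1} \<and> (\<forall>i\<in>S. i+1 \<notin> S)"
  have "\<forall>k. k + 1 < length (path_P n) \<longrightarrow> \<not> (path_P n ! k \<in> S \<and> path_P n ! (k+1) \<in> S)"
  proof (intro allI impI)
    fix k assume "k + 1 < length (path_P n)"
    then have "path_P n ! k = k+1" "path_P n ! (k+1) = k+1+1" by (simp_all add: P_len P_nth)
    then show "\<not> (path_P n ! k \<in> S \<and> path_P n ! (k+1) \<in> S)" using h by simp
  qed
  then show "S \<in> collider_sets (path_P n)"
    unfolding collider_sets_def P_interior using h by blast
qed


lemma par_mem: "u \<in> path_parents (path_P n) d v \<longleftrightarrow>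
   (v \<ge> 2 \<and> u = v-1 \<and> v \<le> n \<and> d (v-2)) \<or> (u = v+1 \<and> v \<ge> 1 \<and> v+1 \<le> n \<and> \<not> d (v-1))"
proof
  assume "u \<in> path_parents (path_P n) d v"
  then obtain k where k: "k + 1 < n"
     "(path_P n ! k = u \<and> path_P n ! (k+1) = v \<and> d k) \<or> (path_P n ! k = v \<and> path_P n ! (k+1) = u \<and> \<not> d k)"
    unfolding path_parents_def P_len by blast
  have e1: "path_P n ! k = k+1" using k(1) by (intro P_nth) simp
  have e2: "path_P n ! (k+1) = k+2" using k(1) P_nth[of "k+1" n] by simp
  show "(v \<ge> 2 \<and> u = v-1 \<and> v \<le> n \<and> d (v-2)) \<or> (u = v+1 \<and> v \<ge> 1 \<and> v+1 \<le> n \<and> \<not> d (v-1))"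
  proof (cases "path_P n ! k = u \<and> path_P n ! (k+1) = v \<and> d k")
    case True
    then have "u = k+1" "v = k+2" "d k" using e1 e2 by auto
    then show ?thesis using k(1) by simp
  next
    case False
    then have "v = k+1" "u = k+2" "\<not> d k" using k(2) e1 e2 by auto
    then show ?thesis using k(1) by simp
  qed
next
  assume h: "(v \<ge> 2 \<and> u = v-1 \<and> v \<le> n \<and> d (v-2)) \<or> (u = v+1 \<and> v \<ge> 1 \<and> v+1 \<le> n \<and> \<not> d (v-1))"
  show "u \<in> path_parents (path_P n) d v"
  proof (cases "v \<ge> 2 \<and> u = v-1 \<and> v \<le> n \<and> d (v-2)")
    case True
    then have a: "v \<ge> 2" "u = v - 1" "v \<le> n" "d (v-2)" by auto
    define k where "k = v - 2"
    have k: "k + 1 < n" "u = k + 1" "v = k + 2" "d k" using a unfolding k_def by auto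
    have e1: "path_P n ! k = k+1" using k(1) by (intro P_nth) simp
    have e2: "path_P n ! (k+1) = k+2" using k(1) P_nth[of "k+1" n] by simp
    show ?thesis unfolding path_parents_def P_len using k e1 e2 by blast
  next
    case False
    then have a: "u = v+1" "v \<ge> 1" "v+1 \<le> n" "\<not> d (v-1)" using h by auto
    define k where "k = v - 1"
    have k: "k + 1 < n" "u = k + 2" "v = k + 1" "\<not> d k" using a unfolding k_def by auto
    have e1: "path_P n ! k = k+1" using k(1) by (intro P_nth) simp
    have e2: "path_P n ! (k+1) = k+2" using k(1) P_nth[of "k+1" n] by simp
    show ?thesis unfolding path_parents_def P_len using k e1 e2 by blast
  qed
qed

lemma coll_mem: "v \<in> path_colliders (path_P n) d \<longleftrightarrow> v \<ge> 2 \<and> v < n \<and> d (v-2) \<and> \<not> d (v-1)"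
proof
  assume "v \<in> path_colliders (path_P n) d"
  then obtain k where k: "k + 2 < n" "path_P n ! (k+1) = v" "d k" "\<not> d (k+1)"
    unfolding path_colliders_def P_len by blast
  have "path_P n ! (k+1) = k+2" using k(1) P_nth[of "k+1" n] by simp
  then have "v = k + 2" using k by simp
  then show "v \<ge> 2 \<and> v < n \<and> d (v-2) \<and> \<not> d (v-1)" using k by simp
next
  assume h: "v \<ge> 2 \<and> v < n \<and> d (v-2) \<and> \<not> d (v-1)"
  define k where "k = v - 2"
  have k: "k + 2 < n" "v = k + 2" "d k" "\<not> d (k+1)" using h unfolding k_def
    by (auto simp: Suc_diff_Suc numeral_2_eq_2)
  have "path_P n ! (k+1) = k+2" using k(1) P_nth[of "k+1" n] by simp
  then show "v \<in> path_colliders (path_P n) d" unfolding path_colliders_def P_len using k by auto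
qed


lemma cs_P_sub: "S \<in> collider_sets (path_P n) \<Longrightarrow> i \<in> S \<Longrightarrow> 2 \<le> i \<and> i < n"
  unfolding cs_P by force

lemma cs_P_ind: "S \<in> collider_sets (path_P n) \<Longrightarrow> i \<in> S \<Longrightarrow> i+1 \<notin> S"
  unfolding cs_P by blast

lemma orient_exists:
  assumes "S \<in> collider_sets (path_P n)"
  shows "path_colliders (path_P n) (\<lambda>k. k+1 \<notin> S) = S"
proof (rule set_eqI)
  fix v
  show "v \<in> path_colliders (path_P n) (\<lambda>k. k+1 \<notin> S) \<longleftrightarrow> v \<in> S"
  proof
    assume "v \<in> path_colliders (path_P n) (\<lambda>k. k+1 \<notin> S)"
    then have "v \<ge> 2" "v - 1 + 1 \<in> S" unfolding coll_mem by auto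
    then show "v \<in> S" by simp
  next
    assume v: "v \<in> S"
    have v2: "v \<ge> 2" "v < n" using cs_P_sub[OF assms v] by auto
    have "v - 1 + 1 = v" using v2 by simp
    then have "v - 1 \<notin> S" using cs_P_ind[OF assms, of "v-1"] v by auto
    moreover have "v - 2 + 1 = v - 1" using v2 by simp
    ultimately show "v \<in> path_colliders (path_P n) (\<lambda>k. k+1 \<notin> S)"
      unfolding coll_mem using v v2 by simp
  qed
qed


definition baseT :: "nat \<Rightarrow> nat set \<Rightarrow> bool" where
  "baseT n T \<longleftrightarrow> (\<exists>i. T = {i}) \<or> (\<exists>i. 1 \<le> i \<and> i < n \<and> T = {i, i+1})"

definition tri :: "nat \<Rightarrow> nat set" where "tri i = {i-1, i, i+1}"

lemma char_P:
  assumes S: "S \<in> collider_sets (path_P n)" and T: "T \<subseteq> {1..n}"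
  shows "char_imset (path_P n) S T \<longleftrightarrow> baseT n T \<or> (\<exists>i\<in>S. T = tri i)"
proof
  assume "char_imset (path_P n) S T"
  then obtain d j where dS: "path_colliders (path_P n) d = S" and j: "j \<in> T"
    and sub: "T - {j} \<subseteq> path_parents (path_P n) d j"
    unfolding char_imset_def by blast
  have j1: "1 \<le> j" "j \<le> n" using j T by auto
  have A: "\<And>x. x \<in> T - {j} \<Longrightarrow> (x = j-1 \<and> j \<ge> 2 \<and> d (j-2)) \<or> (x = j+1 \<and> j+1 \<le> n \<and> \<not> d (j-1))"
  proof -
    fix x assume "x \<in> T - {j}"
    then have "x \<in> path_parents (path_P n) d j" using sub by blast
    then show "(x = j-1 \<and> j \<ge> 2 \<and> d (j-2)) \<or> (x = j+1 \<and> j+1 \<le> n \<and> \<not> d (j-1))"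
      unfolding par_mem by auto
  qed
  have TT: "T - {j} \<subseteq> {j-1, j+1}" using A by blast
  show "baseT n T \<or> (\<exists>i\<in>S. T = tri i)"
  proof (cases "j-1 \<in> T - {j}")
    case c1: True
    show ?thesis
    proof (cases "j+1 \<in> T - {j}")
      case c2: True
      from A[OF c1] have a1: "j \<ge> 2" "d (j-2)" using j1 by auto
      from A[OF c2] have a2: "j+1 \<le> n" "\<not> d (j-1)" by auto
      have "j \<in> S" unfolding dS[symmetric] coll_mem using a1 a2 by simp
      moreover have "T = tri j" unfolding tri_def using TT c1 c2 j by blast
      ultimately show ?thesis by blast
    next
      case c2: False
      have "T = {j-1, j}" using TT c1 c2 j by blast
      moreover have "j - 1 \<ge> 1" "j - 1 < n" "j - 1 + 1 = j" using c1 T j1 by auto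
      ultimately have "baseT n T" unfolding baseT_def by (intro disjI2 exI[of _ "j-1"]) simp
      then show ?thesis by blast
    qed
  next
    case c1: False
    show ?thesis
    proof (cases "j+1 \<in> T - {j}")
      case c2: True
      have "T = {j, j+1}" using TT c1 c2 j by blast
      moreover have "j + 1 \<le> n" using c2 T by auto
      ultimately have "baseT n T" unfolding baseT_def using j1 by auto
      then show ?thesis by blast
    next
      case c2: False
      have "T = {j}" using TT c1 c2 j by blast
      then show ?thesis unfolding baseT_def by blast
    qed
  qed
next
  let ?d = "\<lambda>k. k+1 \<notin> S"
  have dS: "path_colliders (path_P n) ?d = S" by (rule orient_exists[OF S])
  assume "baseT n T \<or> (\<exists>i\<in>S. T = tri i)"
  then have "\<exists>j\<in>T. T - {j} \<subseteq> path_parents (path_P n) ?d j"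
  proof (elim disjE)
    assume "baseT n T"
    then show ?thesis unfolding baseT_def
    proof (elim disjE exE conjE)
      fix i assume "T = {i}" then show ?thesis by auto
    next
      fix i assume i: "1 \<le> i" "i < n" "T = {i, i+1}"
      show ?thesis
      proof (cases "i \<in> S")
        case True
        have "i+1 \<in> path_parents (path_P n) ?d i" unfolding par_mem using i True by simp
        then show ?thesis using i by auto
      next
        case False
        have "i \<in> path_parents (path_P n) ?d (i+1)" unfolding par_mem using i False by simp
        then show ?thesis using i by auto
      qed
    qed
  next
    assume "\<exists>i\<in>S. T = tri i"
    then obtain i where i: "i \<in> S" "T = tri i" by blast
    have i2: "2 \<le> i" "i < n" using cs_P_sub[OF S i(1)] by auto
    have "i - 1 \<notin> S" using cs_P_ind[OF S, of "i-1"] i i2 by auto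
    then have "i - 1 \<in> path_parents (path_P n) ?d i" unfolding par_mem using i2
      by (simp add: Suc_diff_Suc numeral_2_eq_2)
    moreover have "i + 1 \<in> path_parents (path_P n) ?d i" unfolding par_mem using i i2 by simp
    ultimately show ?thesis using i unfolding tri_def by auto
  qed
  then show "char_imset (path_P n) S T" unfolding char_imset_def using dS by blast
qed


lemma lookup_imset_mon:
  "Poly_Mapping.lookup (imset_mon vs a) T =
     (\<Sum>S\<in>Poly_Mapping.keys a. if T \<subseteq> set vs \<and> char_imset vs S T then Poly_Mapping.lookup a S else 0)"
proof -
  have inner: "(\<Sum>T'\<in>{T. T \<subseteq> set vs \<and> char_imset vs S T}. Poly_Mapping.lookup (Poly_Mapping.single T' c) T)
      = (if T \<subseteq> set vs \<and> char_imset vs S T then c else 0)" for S and c :: nat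
  proof -
    have fin: "finite {T. T \<subseteq> set vs \<and> char_imset vs S T}"
      by (rule finite_subset[of _ "Pow (set vs)"]) auto
    have "(\<Sum>T'\<in>{T. T \<subseteq> set vs \<and> char_imset vs S T}. Poly_Mapping.lookup (Poly_Mapping.single T' c) T)
       = (\<Sum>T'\<in>{T. T \<subseteq> set vs \<and> char_imset vs S T}. if T' = T then c else 0)"
      by (rule sum.cong) (auto simp: lookup_single when_def)
    also have "\<dots> = (if T \<subseteq> set vs \<and> char_imset vs S T then c else 0)"
      using fin by (simp add: sum.delta')
    finally show ?thesis .
  qed
  show ?thesis unfolding imset_mon_def lookup_sum using inner by simp
qed

lemma lookup_imset_hom:
  "Poly_Mapping.lookup (imset_hom vs f) M =
     (\<Sum>a\<in>Poly_Mapping.keys f. if imset_mon vs a = M then Poly_Mapping.lookup f a else 0)"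
  unfolding imset_hom_def lookup_sum by (rule sum.cong) (auto simp: lookup_single when_def)

lemma tri_sub: "2 \<le> i \<Longrightarrow> i < n \<Longrightarrow> tri i \<subseteq> set (path_P n)"
  unfolding tri_def P_set by auto

lemma tri_not_base: "2 \<le> i \<Longrightarrow> \<not> baseT n (tri i)"
proof
  assume i: "2 \<le> i" and "baseT n (tri i)"
  then consider (a) x where "tri i = {x}" | (b) x where "tri i = {x, x+1}" unfolding baseT_def by blast
  then show False
  proof cases
    case a
    then have "i - 1 = x" "i + 1 = x" unfolding tri_def by blast+
    then show False by simp
  next
    case b
    then have "i - 1 \<in> {x, x+1}" "i + 1 \<in> {x, x+1}" unfolding tri_def by blast+
    then have "x \<le> i - 1" "i + 1 \<le> x + 1" by auto
    then show False using i by linarith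
  qed
qed

lemma tri_inj: "2 \<le> i \<Longrightarrow> 2 \<le> j \<Longrightarrow> tri i = tri j \<Longrightarrow> i = j"
proof -
  assume i: "2 \<le> i" "2 \<le> j" "tri i = tri j"
  then have "i + 1 \<in> {j-1,j,j+1}" "j + 1 \<in> {i-1,i,i+1}" unfolding tri_def by auto
  then have "i + 1 \<le> j + 1" "j + 1 \<le> i + 1" using i(1,2) by auto
  then show "i = j" by linarith
qed

lemma char_tri:
  assumes S: "S \<in> collider_sets (path_P n)" and i: "2 \<le> i" "i < n"
  shows "char_imset (path_P n) S (tri i) \<longleftrightarrow> i \<in> S"
proof -
  have "tri i \<subseteq> {1..n}" using tri_sub[OF i] by (simp add: P_set)
  then have "char_imset (path_P n) S (tri i) \<longleftrightarrow> (\<exists>j\<in>S. tri i = tri j)"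
    using char_P[OF S] tri_not_base[OF i(1)] by blast
  also have "\<dots> \<longleftrightarrow> i \<in> S"
    using tri_inj[OF i(1)] cs_P_sub[OF S] by blast
  finally show ?thesis .
qed

lemma tri_count:
  assumes a: "Poly_Mapping.keys a \<subseteq> collider_sets (path_P n)" and i: "2 \<le> i" "i < n"
  shows "Poly_Mapping.lookup (imset_mon (path_P n) a) (tri i) =
     (\<Sum>S\<in>Poly_Mapping.keys a. if i \<in> S then Poly_Mapping.lookup a S else 0)"
  unfolding lookup_imset_mon
  by (rule sum.cong) (use a char_tri[OF _ i] tri_sub[OF i] in auto)

lemma count_list_filter: "count_list (filter P xs) x = (if P x then count_list xs x else 0)"
  by (induction xs) auto

lemma rep_sum:
  assumes "represents Ts a"
  shows "(\<Sum>S\<in>Poly_Mapping.keys a. if P S then Poly_Mapping.lookup a S else 0) = length (filter P Ts)"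
proof -
  have lk: "Poly_Mapping.lookup a S = count_list Ts S" for S
    using assms unfolding represents_def by (simp add: count_mset)
  have keys: "Poly_Mapping.keys a = set Ts"
    by (rule set_eqI) (simp add: in_keys_iff lk count_list_0_iff)
  have "(\<Sum>S\<in>Poly_Mapping.keys a. if P S then Poly_Mapping.lookup a S else 0)
      = (\<Sum>S\<in>set Ts. count_list (filter P Ts) S)"
    unfolding keys lk count_list_filter by simp
  also have "\<dots> = length (filter P Ts)" by (rule sum_count_set) auto
  finally show ?thesis .
qed

lemma rep_keys: "represents Ts a \<Longrightarrow> Poly_Mapping.keys a = set Ts"
  unfolding represents_def by (intro set_eqI) (metis count_mset_0_iff in_keys_iff)

lemma rep_deg: "represents Ts a \<Longrightarrow> mon_deg a = length Ts"
  using rep_sum[of Ts a "\<lambda>_. True"] unfolding mon_deg_def by simp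

lemma rep_eq: "represents Ts a \<Longrightarrow> represents Ts' b \<Longrightarrow> mset Ts = mset Ts' \<Longrightarrow> a = b"
  unfolding represents_def by (intro poly_mapping_eqI) metis

lemma rep_concat: "distinct xs \<Longrightarrow>
   count (mset (concat (map (\<lambda>S. replicate (f S) S) xs))) S = (if S \<in> set xs then f S else 0)"
proof (induction xs)
  case Nil
  then show ?case by simp
next
  case (Cons x xs)
  have "count (mset (concat (map (\<lambda>S. replicate (f S) S) (x # xs)))) S
      = count (mset (replicate (f x) x)) S + count (mset (concat (map (\<lambda>S. replicate (f S) S) xs))) S"
    by simp
  also have "\<dots> = (if S = x then f x else 0) + (if S \<in> set xs then f S else 0)"
    using Cons.IH Cons.prems by simp
  finally show ?case using Cons.prems by auto
qed

lemma ex_rep: "\<exists>Ts. represents Ts a"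
proof -
  have "finite (Poly_Mapping.keys a)" by simp
  then obtain xs where xs: "set xs = Poly_Mapping.keys a" "distinct xs"
    using finite_distinct_list by metis
  let ?Ts = "concat (map (\<lambda>S. replicate (Poly_Mapping.lookup a S) S) xs)"
  have "represents ?Ts a"
    unfolding represents_def
  proof
    fix S
    show "count (mset ?Ts) S = Poly_Mapping.lookup a S"
      unfolding rep_concat[OF xs(2)] xs(1) by (simp add: in_keys_iff)
  qed
  then show ?thesis by blast
qed


lemma to_refl: "term_order V le \<Longrightarrow> Poly_Mapping.keys a \<subseteq> V \<Longrightarrow> le a a"
  unfolding term_order_def by blast
lemma to_antisym: "term_order V le \<Longrightarrow> Poly_Mapping.keys a \<subseteq> V \<Longrightarrow> Poly_Mapping.keys b \<subseteq> V \<Longrightarrow> le a b \<Longrightarrow> le b a \<Longrightarrow> a = b"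
  unfolding term_order_def by blast
lemma to_trans: "term_order V le \<Longrightarrow> Poly_Mapping.keys a \<subseteq> V \<Longrightarrow> Poly_Mapping.keys b \<subseteq> V \<Longrightarrow> Poly_Mapping.keys c \<subseteq> V \<Longrightarrow> le a b \<Longrightarrow> le b c \<Longrightarrow> le a c"
  unfolding term_order_def by blast
lemma to_total: "term_order V le \<Longrightarrow> Poly_Mapping.keys a \<subseteq> V \<Longrightarrow> Poly_Mapping.keys b \<subseteq> V \<Longrightarrow> le a b \<or> le b a"
  unfolding term_order_def by blast

lemma ex_max:
  assumes to: "term_order V le" and "finite K" "K \<noteq> {}" "\<forall>a\<in>K. Poly_Mapping.keys a \<subseteq> V"
  shows "\<exists>x\<in>K. \<forall>b\<in>K. le b x"
  using assms(2,3,4)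
proof (induction K rule: finite_ne_induct)
  case (singleton x)
  then show ?case using to_refl[OF to] by auto
next
  case (insert x F)
  then obtain y where y: "y \<in> F" "\<forall>b\<in>F. le b y" by auto
  have kx: "Poly_Mapping.keys x \<subseteq> V" and ky: "Poly_Mapping.keys y \<subseteq> V" using insert.prems y by auto
  show ?case
  proof (cases "le y x")
    case True
    have "\<forall>b\<in>insert x F. le b x"
    proof
      fix b assume "b \<in> insert x F"
      then show "le b x"
      proof
        assume "b = x" then show ?thesis using to_refl[OF to kx] by simp
      next
        assume b: "b \<in> F"
        then have "Poly_Mapping.keys b \<subseteq> V" using insert.prems by auto
        then show ?thesis using to_trans[OF to _ ky kx] y(2) b True by blast
      qed
    qed
    then show ?thesis by blast
  next
    case False
    then have "le x y" using to_total[OF to kx ky] by blast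
    then have "\<forall>b\<in>insert x F. le b y" using y by blast
    then show ?thesis using y by blast
  qed
qed

lemma lead_props:
  assumes to: "term_order V le" and f: "f \<noteq> 0" and kV: "\<forall>a\<in>Poly_Mapping.keys f. Poly_Mapping.keys a \<subseteq> V"
  shows "lead_mon le f \<in> Poly_Mapping.keys f \<and> (\<forall>b\<in>Poly_Mapping.keys f. le b (lead_mon le f))"
proof -
  have "Poly_Mapping.keys f \<noteq> {}" using f by simp
  then obtain x where x: "x \<in> Poly_Mapping.keys f" "\<forall>b\<in>Poly_Mapping.keys f. le b x"
    using ex_max[OF to finite_keys _ kV] by blast
  have "lead_mon le f = x"
    unfolding lead_mon_def
  proof (rule the_equality)
    show "x \<in> Poly_Mapping.keys f \<and> (\<forall>b\<in>Poly_Mapping.keys f. le b x)" using x by blast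
  next
    fix y assume y: "y \<in> Poly_Mapping.keys f \<and> (\<forall>b\<in>Poly_Mapping.keys f. le b y)"
    show "y = x" using to_antisym[OF to] kV x y by blast
  qed
  then show ?thesis using x by simp
qed

definition L1 :: "nat \<Rightarrow> monom" where
  "L1 n = Poly_Mapping.single {2, n-1} 1 + Poly_Mapping.single {} 1"
definition L2 :: "nat \<Rightarrow> monom" where
  "L2 n = Poly_Mapping.single {2} 1 + Poly_Mapping.single {n-1} 1"

lemma rep_L1: "represents [{2, n-1}, {}] (L1 n)"
  unfolding represents_def L1_def by (auto simp: lookup_add lookup_single when_def)
lemma rep_L2: "n \<noteq> 3 \<Longrightarrow> represents [{2}, {n-1}] (L2 n)"
  unfolding represents_def L2_def by (auto simp: lookup_add lookup_single when_def)

lemma L1_ne_L2: "n \<ge> 5 \<Longrightarrow> L1 n \<noteq> L2 n"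
proof
  assume "n \<ge> 5" "L1 n = L2 n"
  then have "Poly_Mapping.lookup (L1 n) {} = Poly_Mapping.lookup (L2 n) {}" by simp
  then show False unfolding L1_def L2_def by (simp add: lookup_add lookup_single when_def)
qed

definition f0 :: "nat \<Rightarrow> ('k::field) ypoly" where
  "f0 n = Poly_Mapping.single (L1 n) 1 - Poly_Mapping.single (L2 n) 1"

lemma keys_f0: "n \<ge> 5 \<Longrightarrow> Poly_Mapping.keys (f0 n :: ('k::field) ypoly) = {L1 n, L2 n}"
proof -
  assume n: "n \<ge> 5"
  have ne: "L1 n \<noteq> L2 n" using L1_ne_L2[OF n] .
  show ?thesis
  proof (rule set_eqI)
    fix a
    show "a \<in> Poly_Mapping.keys (f0 n :: 'k ypoly) \<longleftrightarrow> a \<in> {L1 n, L2 n}"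
      unfolding in_keys_iff f0_def lookup_minus using ne by (auto simp: lookup_single when_def)
  qed
qed

lemma f0_ne: "n \<ge> 5 \<Longrightarrow> (f0 n :: ('k::field) ypoly) \<noteq> 0"
  using keys_f0[of n] by (metis empty_not_insert keys_zero)


lemma imset_rep: "represents Ts a \<Longrightarrow>
  Poly_Mapping.lookup (imset_mon vs a) T = length (filter (\<lambda>S. T \<subseteq> set vs \<and> char_imset vs S T) Ts)"
  unfolding lookup_imset_mon by (rule rep_sum)

lemma cs_A: "n \<ge> 5 \<Longrightarrow> {2, n-1} \<in> collider_sets (path_P n)"
  unfolding cs_P by auto
lemma cs_E: "{} \<in> collider_sets (path_P n)"
  unfolding cs_P by auto
lemma cs_2: "n \<ge> 5 \<Longrightarrow> {2} \<in> collider_sets (path_P n)"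
  unfolding cs_P by auto
lemma cs_n1: "n \<ge> 5 \<Longrightarrow> {n-1} \<in> collider_sets (path_P n)"
  unfolding cs_P by auto

lemma len2: "length (filter P [x, y]) = (if P x then 1 else 0) + (if P y then 1 else 0)"
  by simp

lemma arith_aux: "\<not> (t2 \<and> tk) \<Longrightarrow>
  (if b \<or> t2 \<or> tk then 1 else 0) + (if b then 1 else 0) = (if b \<or> t2 then 1 else 0) + (if b \<or> tk then (1::nat) else 0)"
  by auto

lemma L_same:
  assumes n: "n \<ge> 5"
  shows "imset_mon (path_P n) (L1 n) = imset_mon (path_P n) (L2 n)"
proof (rule poly_mapping_eqI)
  fix T
  have n3: "n \<noteq> 3" using n by simp
  define k where "k = n - 1"
  have k5: "k \<ge> 4" "k \<noteq> 2" using n unfolding k_def by auto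
  have e1: "Poly_Mapping.lookup (imset_mon (path_P n) (L1 n)) T =
      length (filter (\<lambda>S. T \<subseteq> set (path_P n) \<and> char_imset (path_P n) S T) [{2, k}, {}])"
    unfolding k_def by (rule imset_rep[OF rep_L1])
  have e2: "Poly_Mapping.lookup (imset_mon (path_P n) (L2 n)) T =
      length (filter (\<lambda>S. T \<subseteq> set (path_P n) \<and> char_imset (path_P n) S T) [{2}, {k}])"
    unfolding k_def by (rule imset_rep[OF rep_L2[OF n3]])
  show "Poly_Mapping.lookup (imset_mon (path_P n) (L1 n)) T = Poly_Mapping.lookup (imset_mon (path_P n) (L2 n)) T"
  proof (cases "T \<subseteq> set (path_P n)")
    case False
    then show ?thesis unfolding e1 e2 by simp
  next
    case True
    then have T: "T \<subseteq> {1..n}" by (simp add: P_set)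
    have cA: "char_imset (path_P n) {2, k} T \<longleftrightarrow> baseT n T \<or> T = tri 2 \<or> T = tri (k)"
      using char_P[OF cs_A[OF n, folded k_def] T] by auto
    have cE: "char_imset (path_P n) {} T \<longleftrightarrow> baseT n T"
      using char_P[OF cs_E T] by auto
    have c2: "char_imset (path_P n) {2} T \<longleftrightarrow> baseT n T \<or> T = tri 2"
      using char_P[OF cs_2[OF n] T] by auto
    have cn: "char_imset (path_P n) {k} T \<longleftrightarrow> baseT n T \<or> T = tri (k)"
      using char_P[OF cs_n1[OF n, folded k_def] T] by auto
    have "tri 2 \<noteq> tri (k)"
    proof
      assume eq: "tri 2 = tri (k)"
      have "2 = k" using tri_inj[of 2 "k", OF _ _ eq] k5 by simp
      then show False using k5 by simp
    qed
    then have ne: "\<not> (T = tri 2 \<and> T = tri (k))" by blast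
    have p1: "(T \<subseteq> set (path_P n) \<and> char_imset (path_P n) {2,k} T) = (baseT n T \<or> T = tri 2 \<or> T = tri k)"
      using True cA by blast
    have pE: "(T \<subseteq> set (path_P n) \<and> char_imset (path_P n) {} T) = baseT n T"
      using True cE by blast
    have p2: "(T \<subseteq> set (path_P n) \<and> char_imset (path_P n) {2} T) = (baseT n T \<or> T = tri 2)"
      using True c2 by blast
    have pk: "(T \<subseteq> set (path_P n) \<and> char_imset (path_P n) {k} T) = (baseT n T \<or> T = tri k)"
      using True cn by blast
    show ?thesis unfolding e1 e2 len2 p1 pE p2 pk
      by (rule arith_aux[OF ne])
  qed
qed

lemma f0_ideal:
  assumes n: "n \<ge> 5"
  shows "(f0 n :: ('k::field) ypoly) \<in> imset_ideal (path_P n)"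
proof -
  have n3: "n \<noteq> 3" using n by simp
  have k1: "Poly_Mapping.keys (L1 n) = {{2, n-1}, {}}" using rep_keys[OF rep_L1] by simp
  have k2: "Poly_Mapping.keys (L2 n) = {{2}, {n-1}}" using rep_keys[OF rep_L2[OF n3]] by simp
  have ir: "in_ring (collider_sets (path_P n)) (f0 n :: 'k ypoly)"
    unfolding in_ring_def keys_f0[OF n]
    using k1 k2 cs_A[OF n] cs_E cs_2[OF n] cs_n1[OF n] by auto
  have "imset_hom (path_P n) (f0 n :: 'k ypoly) = 0"
  proof (rule poly_mapping_eqI)
    fix M
    have ne: "L1 n \<noteq> L2 n" using L1_ne_L2[OF n] .
    show "Poly_Mapping.lookup (imset_hom (path_P n) (f0 n :: 'k ypoly)) M = Poly_Mapping.lookup 0 M"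
      unfolding lookup_imset_hom keys_f0[OF n] using ne L_same[OF n]
      by (simp add: f0_def lookup_minus lookup_single when_def)
  qed
  then show ?thesis unfolding imset_ideal_def using ir by blast
qed


lemma filt_mset: "mset xs = mset ys \<Longrightarrow> length (filter P xs) = length (filter P ys)"
  by (metis mset_filter size_mset)

lemma bool_aux: "(if a then 1 else 0) + (if b then 1 else 0) = (if c then 1 else (0::nat)) \<Longrightarrow> ((a \<or> b) \<longleftrightarrow> c) \<and> \<not> (a \<and> b)"
  by (cases a; cases b; cases c) auto

lemma pick:
  assumes un: "\<forall>i. (i\<in>C \<or> i\<in>D) \<longleftrightarrow> (i = a \<or> i = b)" and dis: "\<forall>i. \<not> (i\<in>C \<and> i\<in>D)" and ab: "b \<noteq> a"
  shows "(C = {a,b} \<and> D = {}) \<or> (C = {} \<and> D = {a,b}) \<or> (C = {a} \<and> D = {b}) \<or> (C = {b} \<and> D = {a})"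
proof -
  have Cs: "C \<subseteq> {a,b}" and Ds: "D \<subseteq> {a,b}" using un by auto
  have a: "a \<in> C \<or> a \<in> D" and b: "b \<in> C \<or> b \<in> D" using un by auto
  have aa: "a \<in> C \<Longrightarrow> a \<notin> D" "b \<in> C \<Longrightarrow> b \<notin> D" using dis by auto
  show ?thesis
  proof (cases "a \<in> C"; cases "b \<in> C")
    assume h: "a \<in> C" "b \<in> C"
    then have "C = {a,b}" using Cs by auto
    moreover have "D = {}" using Ds h aa by auto
    ultimately show ?thesis by simp
  next
    assume h: "a \<in> C" "b \<notin> C"
    then have "C = {a}" using Cs by auto
    moreover have "D = {b}" using Ds h aa b by auto
    ultimately show ?thesis by simp
  next
    assume h: "a \<notin> C" "b \<in> C"
    then have "C = {b}" using Cs by auto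
    moreover have "D = {a}" using Ds h aa a by auto
    ultimately show ?thesis by simp
  next
    assume h: "a \<notin> C" "b \<notin> C"
    then have "C = {}" using Cs by auto
    moreover have "D = {a,b}" using Ds h a b by auto
    ultimately show ?thesis by simp
  qed
qed

lemma core:
  fixes n :: nat
  assumes n: "n \<ge> 5"
    and TL: "TL = [{2,n-1},{}] \<or> TL = [{2},{n-1}]"
    and sub: "mset Tg \<subseteq># mset TL"
    and len: "length Ta = length Tg"
    and Ta_in: "\<forall>S\<in>set Ta. S \<subseteq> {2..n-1}"
    and cnt: "\<forall>i. 2 \<le> i \<longrightarrow> i < n \<longrightarrow> length (filter (\<lambda>S. i\<in>S) Tg) = length (filter (\<lambda>S. i\<in>S) Ta)"
    and ne: "mset Tg \<noteq> mset Ta"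
  shows "(mset Tg = mset [{2,n-1},{}] \<and> mset Ta = mset [{2},{n-1}]) \<or>
         (mset Tg = mset [{2},{n-1}] \<and> mset Ta = mset [{2,n-1},{}])"
proof -
  have lTL: "length TL = 2" using TL by auto
  have lg: "length Tg \<le> 2" using size_mset_mono[OF sub] lTL by simp
  have TL_in: "\<forall>S\<in>set TL. S \<subseteq> {2..n-1}" using TL n by auto
  have Tg_in: "\<forall>S\<in>set Tg. S \<subseteq> {2..n-1}"
    using TL_in set_mset_mono[OF sub] by auto
  consider "length Tg = 0" | "length Tg = 1" | "length Tg = 2" using lg by linarith
  then show ?thesis
  proof cases
    case 1
    then have "Tg = []" "Ta = []" using len by auto
    then show ?thesis using ne by simp
  next
    case 2
    then obtain X Z where XZ: "Tg = [X]" "Ta = [Z]" using len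
      by (metis One_nat_def length_0_conv length_Suc_conv)
    have X: "X \<subseteq> {2..n-1}" and Z: "Z \<subseteq> {2..n-1}" using Tg_in Ta_in XZ by auto
    have "\<forall>i. 2 \<le> i \<longrightarrow> i < n \<longrightarrow> (i \<in> X \<longleftrightarrow> i \<in> Z)"
    proof (intro allI impI)
      fix i assume "2 \<le> i" "i < n"
      then have "length (filter (\<lambda>S. i\<in>S) [X]) = length (filter (\<lambda>S. i\<in>S) [Z])"
        using cnt XZ by simp
      then show "i \<in> X \<longleftrightarrow> i \<in> Z" by (auto split: if_splits)
    qed
    then have "X = Z" using X Z by (intro set_eqI) force
    then show ?thesis using ne XZ by simp
  next
    case 3
    have eqTL: "mset Tg = mset TL"
    proof (rule ccontr)
      assume "mset Tg \<noteq> mset TL"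
      then have "mset Tg \<subset># mset TL" using sub by (simp add: subset_mset.le_neq_trans)
      then have "size (mset Tg) < size (mset TL)" by (rule mset_subset_size)
      then show False using 3 lTL by simp
    qed
    obtain C D where CD: "Ta = [C, D]" using len 3
      by (metis (no_types, lifting) One_nat_def Suc_1 length_0_conv length_Suc_conv)
    have C: "C \<subseteq> {2..n-1}" and D: "D \<subseteq> {2..n-1}" using Ta_in CD by auto
    have cTL: "length (filter (\<lambda>S. i\<in>S) TL) = (if i = 2 \<or> i = n-1 then 1 else 0)" for i
      using TL n by auto
    have eqn: "(if i \<in> C then 1 else 0) + (if i \<in> D then 1 else 0) = (if i = 2 \<or> i = n-1 then 1 else (0::nat))" for i
    proof (cases "2 \<le> i \<and> i < n")
      case True
      have h: "length (filter (\<lambda>S. i\<in>S) Ta) = length (filter (\<lambda>S. i\<in>S) TL)"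
        using cnt True filt_mset[OF eqTL] by metis
      show ?thesis using h[unfolded CD cTL len2] .
    next
      case False
      then have "i \<notin> C" "i \<notin> D" "\<not> (i = 2 \<or> i = n-1)" using C D n by auto
      then show ?thesis by simp
    qed
    have un: "(i \<in> C \<or> i \<in> D) \<longleftrightarrow> (i = 2 \<or> i = n-1)" for i
      using bool_aux[OF eqn[of i]] by blast
    have dis: "\<not> (i \<in> C \<and> i \<in> D)" for i
      using bool_aux[OF eqn[of i]] by blast
    have n2: "n - 1 \<noteq> 2" using n by simp
    have opts: "(C = {2, n-1} \<and> D = {}) \<or> (C = {} \<and> D = {2,n-1}) \<or> (C = {2} \<and> D = {n-1}) \<or> (C = {n-1} \<and> D = {2})"
      by (rule pick) (use un dis n2 in auto)
    have dm: "mset [{2, n-1}, {}] \<noteq> mset [{2::nat}, {n-1}]"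
    proof
      assume "mset [{2, n-1}, {}] = mset [{2::nat}, {n-1}]"
      moreover have "{} \<in># mset [{2::nat, n-1}, {}]" by simp
      ultimately have "{} \<in># mset [{2::nat}, {n-1}]" by simp
      then show False by simp
    qed
    have "mset Ta = mset [{2, n-1}, {}] \<or> mset Ta = mset [{2}, {n-1}]"
      using opts unfolding CD by (auto simp: add_mset_commute)
    note mTa = this
    from TL show ?thesis
    proof (elim disjE)
      assume "TL = [{2, n-1}, {}]"
      then have "mset Tg = mset [{2, n-1}, {}]" using eqTL by simp
      then show ?thesis using mTa ne by metis
    next
      assume "TL = [{2}, {n-1}]"
      then have "mset Tg = mset [{2}, {n-1}]" using eqTL by simp
      then show ?thesis using mTa ne by metis
    qed
  qed
qed


lemma P'_len: "n \<ge> 5 \<Longrightarrow> m \<ge> 5 \<Longrightarrow> length (path_P' m n) = m"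
  unfolding path_P'_def by auto

lemma P'_eq: "n \<ge> 5 \<Longrightarrow> m \<ge> 5 \<Longrightarrow> path_P' m n = [n-1..<(n-1)+(m-2)] @ [1, 2]"
proof -
  assume n: "n \<ge> 5" and m: "m \<ge> 5"
  have "(n + m - 4) + 1 = (n-1)+(m-2)" using n m by linarith
  then show ?thesis unfolding path_P'_def by metis
qed

lemma P'_nth: "n \<ge> 5 \<Longrightarrow> m \<ge> 5 \<Longrightarrow> k < m \<Longrightarrow>
  path_P' m n ! k = (if k < m - 2 then n - 1 + k else if k = m - 2 then 1 else 2)"
proof -
  assume n: "n \<ge> 5" and m: "m \<ge> 5" and k: "k < m"
  have l: "length [n-1..<(n-1)+(m-2)] = m - 2" by (simp del: upt_Suc)
  show ?thesis
  proof (cases "k < m - 2")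
    case True
    then have "path_P' m n ! k = [n-1..<(n-1)+(m-2)] ! k"
      unfolding P'_eq[OF n m] using l by (simp add: nth_append del: upt_Suc)
    also have "\<dots> = n - 1 + k" using True by (simp del: upt_Suc)
    finally show ?thesis using True by simp
  next
    case False
    then have "path_P' m n ! k = [1, 2] ! (k - (m - 2))"
      unfolding P'_eq[OF n m] using l by (simp add: nth_append del: upt_Suc)
    moreover have "k = m - 2 \<or> k = m - 1" using k False by linarith
    ultimately show ?thesis using m False by auto
  qed
qed

lemma P'_interior: "n \<ge> 5 \<Longrightarrow> m \<ge> 5 \<Longrightarrow> {1, n} \<subseteq> set (butlast (tl (path_P' m n)))"
proof -
  assume n: "n \<ge> 5" and m: "m \<ge> 5"
  have ne: "[n-1..<(n-1)+(m-2)] \<noteq> []" using n m by (simp del: upt_Suc)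
  have "tl (path_P' m n) = tl [n-1..<(n-1)+(m-2)] @ [1, 2]" unfolding P'_eq[OF n m] by (rule tl_append2[OF ne])
  then have "butlast (tl (path_P' m n)) = tl [n-1..<(n-1)+(m-2)] @ [1]" by (simp add: butlast_append)
  moreover have "tl [n-1..<(n-1)+(m-2)] = [n..<(n-1)+(m-2)]" using n by (simp add: tl_upt del: upt_Suc)
  moreover have "n \<in> set [n..<(n-1)+(m-2)]" using n m by (simp del: upt_Suc)
  ultimately show ?thesis by auto
qed

lemma cs_P'_1n:
  assumes n: "n \<ge> 5" and m: "m \<ge> 5"
  shows "{1, n} \<in> collider_sets (path_P' m n)"
proof -
  have pos: "k < m \<Longrightarrow> path_P' m n ! k \<in> {1, n} \<Longrightarrow> k = 1 \<or> k = m - 2" for k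
  proof -
    assume k: "k < m" and h: "path_P' m n ! k \<in> {1, n}"
    show "k = 1 \<or> k = m - 2"
    proof (cases "k < m - 2")
      case True
      then have "path_P' m n ! k = n - 1 + k" using P'_nth[OF n m k] by simp
      then show ?thesis using h n by auto
    next
      case False
      then show ?thesis using h P'_nth[OF n m k] n by (auto split: if_splits)
    qed
  qed
  have "\<forall>k. k + 1 < length (path_P' m n) \<longrightarrow> \<not> (path_P' m n ! k \<in> {1, n} \<and> path_P' m n ! (k+1) \<in> {1, n})"
  proof (intro allI impI notI)
    fix k assume k: "k + 1 < length (path_P' m n)" and h: "path_P' m n ! k \<in> {1, n} \<and> path_P' m n ! (k+1) \<in> {1, n}"
    have "k + 1 < m" using k P'_len[OF n m] by simp
    then have "k = 1 \<or> k = m - 2" "k + 1 = 1 \<or> k + 1 = m - 2"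
      using pos[of k] pos[of "k+1"] h by auto
    then show False using m by auto
  qed
  then show ?thesis unfolding collider_sets_def using P'_interior[OF n m] by blast
qed

lemma cs_P'_E: "{} \<in> collider_sets (path_P' m n)"
  unfolding collider_sets_def by simp

lemma cyc_no: "x + 1 < N \<Longrightarrow> y < N \<Longrightarrow> x + 1 \<noteq> y \<Longrightarrow> \<not> cyc_consec N x y"
  unfolding cyc_consec_def by simp

lemma Q_in1: "n \<ge> 5 \<Longrightarrow> m \<ge> 5 \<Longrightarrow> ({}, {2, n-1}) \<in> Q_set m n"
proof -
  assume n: "n \<ge> 5" and m: "m \<ge> 5"
  have N: "n + 1 \<le> n + m - 4" using m by linarith
  have c: "\<not> cyc_consec (n+m-4) x y" if "x \<in> {2,n-1}" "y \<in> {2,n-1}" for x y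
    by (rule cyc_no) (use that n N in auto)
  show ?thesis unfolding Q_set_def using cs_P'_E cs_A[OF n] c by auto
qed

lemma Q_in2: "n \<ge> 5 \<Longrightarrow> m \<ge> 5 \<Longrightarrow> ({1, n}, {}) \<in> Q_set m n"
proof -
  assume n: "n \<ge> 5" and m: "m \<ge> 5"
  have N: "n + 1 \<le> n + m - 4" using m by linarith
  have c: "\<not> cyc_consec (n+m-4) x y" if "x \<in> {1,n}" "y \<in> {1,n}" for x y
  proof (cases "x = 1")
    case True
    then show ?thesis by (intro cyc_no) (use that n N in auto)
  next
    case False
    then have x: "x = n" using that by simp
    show ?thesis
    proof (cases "n + 1 = n + m - 4")
      case True
      then have "(x + 1) mod (n+m-4) = 0" using x by simp
      moreover have "y mod (n+m-4) = y" using that N n by auto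
      ultimately show ?thesis unfolding cyc_consec_def using that n by auto
    next
      case False
      then show ?thesis by (intro cyc_no) (use that n N x in auto)
    qed
  qed
  show ?thesis unfolding Q_set_def using cs_P'_1n[OF n m] cs_E[of n] c by auto
qed

lemma Q_in3: "n \<ge> 5 \<Longrightarrow> m \<ge> 5 \<Longrightarrow> ({}, {2}) \<in> Q_set m n \<and> ({}, {n-1}) \<in> Q_set m n"
proof -
  assume n: "n \<ge> 5" and m: "m \<ge> 5"
  have N: "n + 1 \<le> n + m - 4" using m by linarith
  have c1: "\<not> cyc_consec (n+m-4) 2 2" by (rule cyc_no) (use n N in auto)
  have c2: "\<not> cyc_consec (n+m-4) (n-1) (n-1)" by (rule cyc_no) (use n N in auto)
  show ?thesis unfolding Q_set_def using cs_P'_E cs_2[OF n] cs_n1[OF n] c1 c2 by auto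
qed

lemma Q_out: "n \<ge> 5 \<Longrightarrow> ({1, n}, {2}) \<notin> Q_set m n \<and> ({1, n}, {n-1}) \<notin> Q_set m n \<and> ({}, {}) \<notin> Q_set m n"
proof -
  assume n: "n \<ge> 5"
  have "cyc_consec (n+m-4) 1 2" unfolding cyc_consec_def by (simp add: numeral_2_eq_2)
  moreover have "cyc_consec (n+m-4) (n-1) n" unfolding cyc_consec_def using n by simp
  ultimately show ?thesis unfolding Q_set_def by blast
qed


lemma two_elems: "mset xs = mset [x, y] \<Longrightarrow> l < 2 \<Longrightarrow> xs ! l \<in> {x, y}"
proof -
  assume h: "mset xs = mset [x, y]" and l: "l < 2"
  have "length xs = 2" using h by (metis length_Cons list.size(3) numeral_2_eq_2 size_mset One_nat_def)
  then have "xs ! l \<in> set xs" using l by simp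
  also have "set xs = {x, y}" using h by (metis set_mset_mset list.set(1) list.set(2) insert_commute)
  finally show ?thesis .
qed

lemma has_elem: "mset xs = mset [x, y] \<Longrightarrow> \<exists>l<2. xs ! l = y"
proof -
  assume h: "mset xs = mset [x, y]"
  have len: "length xs = 2" using h by (metis length_Cons list.size(3) numeral_2_eq_2 size_mset One_nat_def)
  have "y \<in> set xs" using h by (metis list.set_intros(1) list.set_intros(2) set_mset_mset)
  then show ?thesis using len by (metis in_set_conv_nth)
qed

lemma fail_A:
  assumes n: "n \<ge> 5" and m: "m \<ge> 5"
    and g: "mset Tg = mset [{2, n-1}, {}]" and a: "mset Ta = mset [{2}, {n-1}]"
    and s: "\<sigma> permutes {..<2::nat}"
  shows "\<not> ({S's. length S's = 2 \<and> (\<forall>l<2. (S's!l, Tg!l) \<in> Q_set m n)} \<subseteq>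
              {S's. length S's = 2 \<and> (\<forall>l<2. (S's!l, Ta!(\<sigma> l)) \<in> Q_set m n)})"
proof
  assume sub: "{S's. length S's = 2 \<and> (\<forall>l<2. (S's!l, Tg!l) \<in> Q_set m n)} \<subseteq>
              {S's. length S's = 2 \<and> (\<forall>l<2. (S's!l, Ta!(\<sigma> l)) \<in> Q_set m n)}"
  let ?X = "map (\<lambda>S. if S = {} then {1, n} else {}) Tg"
  have lenTg: "length Tg = 2" using g by (metis length_Cons list.size(3) numeral_2_eq_2 size_mset One_nat_def)
  have "(\<forall>l<2. (?X!l, Tg!l) \<in> Q_set m n)"
  proof (intro allI impI)
    fix l :: nat assume l: "l < 2"
    have "Tg ! l \<in> {{2, n-1}, {}}" by (rule two_elems[OF g l])
    then show "(?X!l, Tg!l) \<in> Q_set m n"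
      using l lenTg Q_in1[OF n m] Q_in2[OF n m] by auto
  qed
  then have "?X \<in> {S's. length S's = 2 \<and> (\<forall>l<2. (S's!l, Tg!l) \<in> Q_set m n)}" using lenTg by simp
  then have inr: "\<forall>l<2. (?X!l, Ta!(\<sigma> l)) \<in> Q_set m n" using sub by blast
  obtain l0 where l0: "l0 < 2" "Tg ! l0 = {}" using has_elem[OF g] by blast
  have "\<sigma> l0 \<in> {..<2}" using permutes_in_image[OF s] l0 by simp
  then have "Ta ! (\<sigma> l0) \<in> {{2}, {n-1}}" using two_elems[OF a] by simp
  moreover have "?X ! l0 = {1, n}" using l0 lenTg by simp
  ultimately show False using inr l0 Q_out[OF n, of m] by auto
qed

lemma fail_B:
  assumes n: "n \<ge> 5" and m: "m \<ge> 5"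
    and g: "mset Tg = mset [{2}, {n-1}]" and a: "mset Ta = mset [{2, n-1}, {}]"
    and s: "\<sigma> permutes {..<2::nat}"
  shows "\<not> ({S's. length S's = 2 \<and> (\<forall>l<2. (S's!l, Tg!l) \<in> Q_set m n)} \<subseteq>
              {S's. length S's = 2 \<and> (\<forall>l<2. (S's!l, Ta!(\<sigma> l)) \<in> Q_set m n)})"
proof
  assume sub: "{S's. length S's = 2 \<and> (\<forall>l<2. (S's!l, Tg!l) \<in> Q_set m n)} \<subseteq>
              {S's. length S's = 2 \<and> (\<forall>l<2. (S's!l, Ta!(\<sigma> l)) \<in> Q_set m n)}"
  let ?X = "[{}, {}] :: nat set list"
  have "(\<forall>l<2. (?X!l, Tg!l) \<in> Q_set m n)"
  proof (intro allI impI)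
    fix l :: nat assume l: "l < 2"
    have "Tg ! l \<in> {{2}, {n-1}}" by (rule two_elems[OF g l])
    moreover have "?X ! l = {}" using l by (cases l) auto
    ultimately show "(?X!l, Tg!l) \<in> Q_set m n"
      using Q_in3[OF n m] by auto
  qed
  then have "?X \<in> {S's. length S's = 2 \<and> (\<forall>l<2. (S's!l, Tg!l) \<in> Q_set m n)}" by simp
  then have inr: "\<forall>l<2. (?X!l, Ta!(\<sigma> l)) \<in> Q_set m n" using sub by blast
  obtain j where j: "j < 2" "Ta ! j = {}" using has_elem[OF a] by blast
  have "j \<in> \<sigma> ` {..<2}" using permutes_image[OF s] j by simp
  then obtain l where l: "l < 2" "\<sigma> l = j" by auto
  have "?X ! l = {}" using l by (cases l) auto
  then show False using inr l j Q_out[OF n, of m] by auto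
qed


lemma other_key:
  assumes hom: "imset_hom vs g = 0" and L: "L \<in> Poly_Mapping.keys g"
  shows "\<exists>a\<in>Poly_Mapping.keys g. a \<noteq> L \<and> imset_mon vs a = imset_mon vs L"
proof (rule ccontr)
  assume no: "\<not> ?thesis"
  let ?M = "imset_mon vs L"
  have "0 = Poly_Mapping.lookup (imset_hom vs g) ?M" using hom by simp
  also have "\<dots> = (\<Sum>a\<in>Poly_Mapping.keys g. if imset_mon vs a = ?M then Poly_Mapping.lookup g a else 0)"
    by (rule lookup_imset_hom)
  also have "\<dots> = Poly_Mapping.lookup g L + (\<Sum>a\<in>Poly_Mapping.keys g - {L}. if imset_mon vs a = ?M then Poly_Mapping.lookup g a else 0)"
    using L by (simp add: sum.remove)
  also have "(\<Sum>a\<in>Poly_Mapping.keys g - {L}. if imset_mon vs a = ?M then Poly_Mapping.lookup g a else 0) = 0"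
    using no by (intro sum.neutral) auto
  finally have "Poly_Mapping.lookup g L = 0" by simp
  then show False using L by (simp add: in_keys_iff)
qed

theorem proposition5p3:
  fixes m n :: nat
  assumes "m \<ge> 5" and "n \<ge> 5"
  shows "\<not> (\<exists>(le :: monom \<Rightarrow> monom \<Rightarrow> bool) (G :: ('k::field) ypoly set).
            term_order (collider_sets (path_P n)) le \<and>
            groebner_basis le (imset_ideal (path_P n)) G \<and>
            (\<forall>g\<in>G. weakly_Q_hom m n le g))"
proof
  assume "\<exists>(le :: monom \<Rightarrow> monom \<Rightarrow> bool) (G :: ('k::field) ypoly set).
            term_order (collider_sets (path_P n)) le \<and>
            groebner_basis le (imset_ideal (path_P n)) G \<and>
            (\<forall>g\<in>G. weakly_Q_hom m n le g)"
  then obtain le and G :: "'k ypoly set" where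
    to: "term_order (collider_sets (path_P n)) le" and
    gb: "groebner_basis le (imset_ideal (path_P n)) G" and
    wq: "\<forall>g\<in>G. weakly_Q_hom m n le g" by blast
  have m: "m \<ge> 5" and n: "n \<ge> 5" using assms by auto
  have n3: "n \<noteq> 3" using n by simp
  let ?V = "collider_sets (path_P n)"
  let ?f = "f0 n :: 'k ypoly"
  have fI: "?f \<in> imset_ideal (path_P n)" by (rule f0_ideal[OF n])
  have fne: "?f \<noteq> 0" by (rule f0_ne[OF n])
  obtain g where gG: "g \<in> G" and gne: "g \<noteq> 0" and dv: "mon_dvd (lead_mon le g) (lead_mon le ?f)"
    using gb fI fne unfolding groebner_basis_def by blast
  have gI: "g \<in> imset_ideal (path_P n)" using gb gG unfolding groebner_basis_def by blast
  have gV: "\<forall>a\<in>Poly_Mapping.keys g. Poly_Mapping.keys a \<subseteq> ?V"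
    using gI unfolding imset_ideal_def in_ring_def by blast
  have ghom: "imset_hom (path_P n) g = 0" using gI unfolding imset_ideal_def by blast
  have fV: "\<forall>a\<in>Poly_Mapping.keys ?f. Poly_Mapping.keys a \<subseteq> ?V"
    using fI unfolding imset_ideal_def in_ring_def by blast
  have kf: "Poly_Mapping.keys ?f = {L1 n, L2 n}" by (rule keys_f0[OF n])
  have Lf: "lead_mon le ?f \<in> {L1 n, L2 n}" using lead_props[OF to fne fV] unfolding kf by blast
  define Lg where "Lg = lead_mon le g"
  have Lg: "Lg \<in> Poly_Mapping.keys g" using lead_props[OF to gne gV] unfolding Lg_def by blast
  obtain d where dd: "\<forall>a\<in>Poly_Mapping.keys g. mon_deg a = d" and
    cond: "\<forall>a\<in>Poly_Mapping.keys g. \<forall>Ss Ts. length Ss = d \<longrightarrow> length Ts = d \<longrightarrow>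
        represents Ss (lead_mon le g) \<longrightarrow> represents Ts a \<longrightarrow>
        (\<exists>\<sigma>. \<sigma> permutes {..<d} \<and>
           {S's. length S's = d \<and> (\<forall>l<d. (S's!l, Ss!l) \<in> Q_set m n)} \<subseteq>
           {S's. length S's = d \<and> (\<forall>l<d. (S's!l, Ts!(\<sigma> l)) \<in> Q_set m n)})"
    using wq gG unfolding weakly_Q_hom_def by blast
  obtain a where a: "a \<in> Poly_Mapping.keys g" "a \<noteq> Lg" "imset_mon (path_P n) a = imset_mon (path_P n) Lg"
    using other_key[OF ghom Lg] by blast
  obtain Tg where Tg: "represents Tg Lg" using ex_rep by blast
  obtain Ta where Ta: "represents Ta a" using ex_rep by blast
  have lTg: "length Tg = d" using rep_deg[OF Tg] dd Lg by simp
  have lTa: "length Ta = d" using rep_deg[OF Ta] dd a(1) by simp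
  define TL where "TL = (if lead_mon le ?f = L1 n then [{2, n-1}, {}] else [{2}, {n-1}])"
  have TLo: "TL = [{2,n-1},{}] \<or> TL = [{2},{n-1}]" unfolding TL_def by simp
  have TLr: "represents TL (lead_mon le ?f)"
    using Lf rep_L1[of n] rep_L2[OF n3] unfolding TL_def by auto
  have sub: "mset Tg \<subseteq># mset TL"
    unfolding subseteq_mset_def
  proof
    fix S
    have "count (mset Tg) S = Poly_Mapping.lookup Lg S" using Tg unfolding represents_def by simp
    also have "\<dots> \<le> Poly_Mapping.lookup (lead_mon le ?f) S" using dv unfolding mon_dvd_def Lg_def by blast
    also have "\<dots> = count (mset TL) S" using TLr unfolding represents_def by simp
    finally show "count (mset Tg) S \<le> count (mset TL) S" .
  qed
  have aV: "Poly_Mapping.keys a \<subseteq> ?V" using gV a(1) by blast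
  have LgV: "Poly_Mapping.keys Lg \<subseteq> ?V" using gV Lg by blast
  have Ta_in: "\<forall>S\<in>set Ta. S \<subseteq> {2..n-1}"
  proof
    fix S assume "S \<in> set Ta"
    then have "S \<in> ?V" using aV rep_keys[OF Ta] by blast
    then show "S \<subseteq> {2..n-1}" unfolding cs_P by blast
  qed
  have cnt: "\<forall>i. 2 \<le> i \<longrightarrow> i < n \<longrightarrow> length (filter (\<lambda>S. i\<in>S) Tg) = length (filter (\<lambda>S. i\<in>S) Ta)"
  proof (intro allI impI)
    fix i assume i: "2 \<le> i" "i < n"
    have "length (filter (\<lambda>S. i\<in>S) Tg) = Poly_Mapping.lookup (imset_mon (path_P n) Lg) (tri i)"
      using tri_count[OF LgV i] rep_sum[OF Tg] by simp
    also have "\<dots> = Poly_Mapping.lookup (imset_mon (path_P n) a) (tri i)" using a(3) by simp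
    also have "\<dots> = length (filter (\<lambda>S. i\<in>S) Ta)"
      using tri_count[OF aV i] rep_sum[OF Ta] by simp
    finally show "length (filter (\<lambda>S. i\<in>S) Tg) = length (filter (\<lambda>S. i\<in>S) Ta)" .
  qed
  have ne: "mset Tg \<noteq> mset Ta" using rep_eq[OF Tg Ta] a(2) by blast
  have len: "length Ta = length Tg" using lTa lTg by simp
  have res: "(mset Tg = mset [{2,n-1},{}] \<and> mset Ta = mset [{2},{n-1}]) \<or>
         (mset Tg = mset [{2},{n-1}] \<and> mset Ta = mset [{2,n-1},{}])"
    by (rule core[OF n TLo sub len Ta_in cnt ne])
  then have "mset Tg = mset [{2,n-1},{}] \<or> mset Tg = mset [{2},{n-1}]" by blast
  then have "length Tg = length [{2::nat,n-1},{}] \<or> length Tg = length [{2::nat},{n-1}]"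
    by (metis mset_eq_length)
  then have "length Tg = 2" by simp
  then have d2: "d = 2" using lTg by simp
  obtain \<sigma> where s: "\<sigma> permutes {..<2}" and incl:
    "{S's. length S's = 2 \<and> (\<forall>l<2. (S's!l, Tg!l) \<in> Q_set m n)} \<subseteq>
     {S's. length S's = 2 \<and> (\<forall>l<2. (S's!l, Ta!(\<sigma> l)) \<in> Q_set m n)}"
    using cond a(1) lTg lTa Tg Ta unfolding Lg_def d2 by blast
  from res show False
  proof
    assume h: "mset Tg = mset [{2,n-1},{}] \<and> mset Ta = mset [{2},{n-1}]"
    show False using fail_A[OF n m _ _ s] h incl by blast
  next
    assume h: "mset Tg = mset [{2},{n-1}] \<and> mset Ta = mset [{2,n-1},{}]"
    show False using fail_B[OF n m _ _ s] h incl by blast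
  qed
qed

end
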